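(* If $\mathcal I$ is a P-ideal on $\omega$, then $\mathrm{add}_\omega(\mathcal I)=\mathrm{add}^*(\mathcal I)$.
   Context: An ideal on $\omega$ is a family $\mathcal I\subseteq\mathcal P(\omega)$ closed under finite unions and subsets, containing all finite sets, with $\omega\notin\mathcal I$. $\mathcal I$ is a P-ideal if for every countable $\mathcal A\subseteq\mathcal I$ there is $B\in\mathcal I$ with $A\setminus B$ finite for all $A\in\mathcal A$. With the convention $\min\emptyset=\infty$: $\mathrm{add}_\omega(\mathcal I)=\min\{|\mathcal A|:\mathcal A\subseteq\mathcal I$ and for every sequence $(B_n)\in\mathcal I^\omega$ there is $A\in\mathcal A$ with $A\not\subseteq B_n$ for all $n\}$; $\mathrm{add}^*(\mathcal I)=\min\{|\mathcal A|:\mathcal A\subseteq\mathcal I$ and for every $B\in\mathcal I$ there is $A\in\mathcal A$ with $A\setminus B$ infinite$\}$. *)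

theory Defs
  imports "HOL-Library.Countable_Set"
begin

definition is_ideal :: "nat set set \<Rightarrow> bool" where
  "is_ideal I \<longleftrightarrow>
     (\<forall>A\<in>I. \<forall>B\<in>I. A \<union> B \<in> I) \<and>
     (\<forall>A\<in>I. \<forall>B. B \<subseteq> A \<longrightarrow> B \<in> I) \<and>
     (\<forall>F. finite F \<longrightarrow> F \<in> I) \<and>
     UNIV \<notin> I"

definition is_P_ideal :: "nat set set \<Rightarrow> bool" where
  "is_P_ideal I \<longleftrightarrow> is_ideal I \<and>
     (\<forall>\<A>. countable \<A> \<and> \<A> \<subseteq> I \<longrightarrow>
        (\<exists>B\<in>I. \<forall>A\<in>\<A>. finite (A - B)))"

text \<open>Families witnessing add_omega(I): the minimum of their cardinalities is add_omega(I).\<close>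
definition addw_witness :: "nat set set \<Rightarrow> nat set set \<Rightarrow> bool" where
  "addw_witness I \<A> \<longleftrightarrow> \<A> \<subseteq> I \<and>
     (\<forall>B :: nat \<Rightarrow> nat set. (\<forall>n. B n \<in> I) \<longrightarrow>
        (\<exists>A\<in>\<A>. \<forall>n. \<not> A \<subseteq> B n))"

text \<open>Families witnessing add*(I): the minimum of their cardinalities is add*(I).\<close>
definition addstar_witness :: "nat set set \<Rightarrow> nat set set \<Rightarrow> bool" where
  "addstar_witness I \<A> \<longleftrightarrow> \<A> \<subseteq> I \<and>
     (\<forall>B\<in>I. \<exists>A\<in>\<A>. infinite (A - B))"

text \<open>The minimal cardinalities (with min of empty = infinity) agree iff each witness
  of one kind is dominated in cardinality by some witness of the other kind.\<close>
definition same_min_card :: "('a set \<Rightarrow> bool) \<Rightarrow> ('a set \<Rightarrow> bool) \<Rightarrow> bool" where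
  "same_min_card P Q \<longleftrightarrow>
     (\<forall>A. P A \<longrightarrow> (\<exists>B. Q B \<and> (card_of B, card_of A) \<in> ordLeq)) \<and>
     (\<forall>B. Q B \<longrightarrow> (\<exists>A. P A \<and> (card_of A, card_of B) \<in> ordLeq))"

end

theory Submission
  imports Defs
begin

lemma w_to_star:
  assumes I: "is_ideal I" and W: "addw_witness I A"
  shows "addstar_witness I A"
  unfolding addstar_witness_def
proof (intro conjI ballI)
  show "A \<subseteq> I" using W unfolding addw_witness_def by blast
next
  fix B assume B: "B \<in> I"
  define C where "C = (\<lambda>n::nat. B \<union> {..<n})"
  have CI: "\<forall>n. C n \<in> I"
    using I B unfolding is_ideal_def C_def by blast
  then obtain X where X: "X \<in> A" "\<forall>n. \<not> X \<subseteq> C n"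
    using W unfolding addw_witness_def by blast
  show "\<exists>X\<in>A. infinite (X - B)"
  proof (rule ccontr)
    assume "\<not> ?thesis"
    with X have fin: "finite (X - B)" by blast
    then obtain n where "X - B \<subseteq> {..<n}"
      using finite_nat_bounded by blast
    then have "X \<subseteq> C n" unfolding C_def by blast
    with X show False by blast
  qed
qed

lemma star_to_w:
  assumes P: "is_P_ideal I" and S: "addstar_witness I A"
  shows "addw_witness I A"
  unfolding addw_witness_def
proof (intro conjI allI impI)
  show "A \<subseteq> I" using S unfolding addstar_witness_def by blast
next
  fix C :: "nat \<Rightarrow> nat set" assume CI: "\<forall>n. C n \<in> I"
  have "countable (range C)" by simp
  moreover have "range C \<subseteq> I" using CI by blast
  ultimately obtain B where B: "B \<in> I" "\<forall>D\<in>range C. finite (D - B)"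
    using P unfolding is_P_ideal_def by blast
  then obtain X where X: "X \<in> A" "infinite (X - B)"
    using S unfolding addstar_witness_def by blast
  have "\<forall>n. \<not> X \<subseteq> C n"
  proof
    fix n show "\<not> X \<subseteq> C n"
    proof
      assume "X \<subseteq> C n"
      then have "X - B \<subseteq> C n - B" by blast
      moreover have "finite (C n - B)" using B by blast
      ultimately show False using X finite_subset by blast
    qed
  qed
  then show "\<exists>X\<in>A. \<forall>n. \<not> X \<subseteq> C n" using X by blast
qed

theorem proposition5p7:
  fixes I :: "nat set set"
  assumes "is_P_ideal I"
  shows "same_min_card (addw_witness I) (addstar_witness I)"
  unfolding same_min_card_def
proof (intro conjI allI impI)
  have I: "is_ideal I" using assms unfolding is_P_ideal_def by blast
  fix A assume "addw_witness I A"
  then show "\<exists>B. addstar_witness I B \<and> (card_of B, card_of A) \<in> ordLeq"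
    using w_to_star[OF I] card_of_mono1[of A A] by blast
next
  fix A assume "addstar_witness I A"
  then show "\<exists>B. addw_witness I B \<and> (card_of B, card_of A) \<in> ordLeq"
    using star_to_w[OF assms] card_of_mono1[of A A] by blast
qed

end
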